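(* Let $(X(n),V(n))_{n\ge0}$ be a solution of the discrete Motsch–Tadmor model (as in the context), and assume there is an integer $n^\infty>0$ with $\|\Delta^x(n)\|_F\le M$ for all $n<n^\infty$ and $\|\Delta^x(n^\infty)\|_F>M$. Let $s_0<s_1<\dots<s_K$ be the distinct elements of the set $\{\|\Delta^x(n)\|_F:\ 0\le n\le n^\infty,\ \|\Delta^x(n)\|_F\ge\|\Delta^x(0)\|_F\}$, listed in increasing order. Then $s_0=\|\Delta^x(0)\|_F$, $s_K=\|\Delta^x(n^\infty)\|_F$, and \[ \sum_{q=0}^{K-1}(s_{q+1}-s_q)\,\psi(s_q)\le\sum_{n=0}^{n^\infty-1}\big(\|\Delta^x(n+1)\|_F-\|\Delta^x(n)\|_F\big)\,\psi(\|\Delta^x(n)\|_F). \]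
   Context: Discrete MT model: fix $N\ge1$, $d\ge1$, $\kappa>0$, $h>0$, and $a:[0,\infty)\to\mathbb{R}$ with constants $0<c_1\le c_2$, $c_1\le a\le c_2$, $|a(r_1)-a(r_2)|\le L_a|r_1-r_2|$ ($L_a>0$); $0<h<\min\{1,1/\kappa\}$. A solution satisfies $x_i(n+1)=x_i(n)+hv_i(n)$, $v_i(n+1)=v_i(n)+h\kappa\sum_j\phi_{ij}(n)(v_j(n)-v_i(n))$ with $\phi_{ij}(n)=\frac{a(\|x_i(n)-x_j(n)\|)}{\sum_ka(\|x_i(n)-x_k(n)\|)}$, $x_i,v_i\in\mathbb{R}^d$. Notation: $\|\Delta^x(n)\|_F=(\sum_{i,j}\|x_i(n)-x_j(n)\|^2)^{1/2}$. Constants: $\|\phi\|_{\mathrm{Lip}}=\frac{L_a}{Nc_1}(1+\frac{c_2}{c_1})$, $M=\frac{1}{4N\|\phi\|_{\mathrm{Lip}}}$, $\psi(s)=1-\|\phi\|_{\mathrm{Lip}}Ns$. *)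

theory Defs
  imports "HOL-Analysis.Analysis"
begin

text \<open>Discrete Motsch--Tadmor model. Agents are indexed by i < N, time steps by n :: nat;
  positions and velocities are x n i, v n i :: real^'d (dimension d = CARD('d) \<ge> 1).\<close>

definition MT_phi :: "nat \<Rightarrow> (real \<Rightarrow> real) \<Rightarrow> (nat \<Rightarrow> 'v::real_normed_vector) \<Rightarrow> nat \<Rightarrow> nat \<Rightarrow> real" where
  "MT_phi N a X i j = a (norm (X i - X j)) / (\<Sum>k<N. a (norm (X i - X k)))"

definition MT_solution :: "nat \<Rightarrow> real \<Rightarrow> real \<Rightarrow> (real \<Rightarrow> real)
    \<Rightarrow> (nat \<Rightarrow> nat \<Rightarrow> 'v::real_normed_vector) \<Rightarrow> (nat \<Rightarrow> nat \<Rightarrow> 'v) \<Rightarrow> bool" where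
  "MT_solution N \<kappa> h a x v \<longleftrightarrow>
     (\<forall>n i. i < N \<longrightarrow>
        x (Suc n) i = x n i + h *\<^sub>R v n i \<and>
        v (Suc n) i = v n i + (h * \<kappa>) *\<^sub>R (\<Sum>j<N. MT_phi N a (x n) i j *\<^sub>R (v n j - v n i)))"

definition DeltaF :: "nat \<Rightarrow> (nat \<Rightarrow> nat \<Rightarrow> 'v::real_normed_vector) \<Rightarrow> nat \<Rightarrow> real" where
  "DeltaF N x n = sqrt (\<Sum>i<N. \<Sum>j<N. (norm (x n i - x n j))\<^sup>2)"

definition phi_Lip :: "nat \<Rightarrow> real \<Rightarrow> real \<Rightarrow> real \<Rightarrow> real" where
  "phi_Lip N c1 c2 La = La / (real N * c1) * (1 + c2 / c1)"

definition M_const :: "nat \<Rightarrow> real \<Rightarrow> real \<Rightarrow> real \<Rightarrow> real" where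
  "M_const N c1 c2 La = 1 / (4 * real N * phi_Lip N c1 c2 La)"

definition psi :: "nat \<Rightarrow> real \<Rightarrow> real \<Rightarrow> real \<Rightarrow> real \<Rightarrow> real" where
  "psi N c1 c2 La s = 1 - phi_Lip N c1 c2 La * real N * s"

end

theory Submission
  imports Defs
begin



definition cl :: "real \<Rightarrow> real \<Rightarrow> real \<Rightarrow> real" where
  "cl a b y = max 0 (min y b - a)"

lemma sumcl:
  fixes s :: "nat \<Rightarrow> real"
  assumes "\<And>i j. i \<le> j \<Longrightarrow> j \<le> K \<Longrightarrow> s i \<le> s j" "s 0 \<le> y"
  shows "(\<Sum>q<K. cl (s q) (s (Suc q)) y) = min y (s K) - s 0"
  using assms
proof (induction K)
  case 0 then show ?case by (simp add: cl_def)
next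
  case (Suc K)
  have IH: "(\<Sum>q<K. cl (s q) (s (Suc q)) y) = min y (s K) - s 0"
    using Suc by auto
  have "s K \<le> s (Suc K)" using Suc.prems by auto
  then show ?case using IH by (auto simp: cl_def)
qed

definition CC :: "real \<Rightarrow> (nat \<Rightarrow> real) \<Rightarrow> nat \<Rightarrow> real \<Rightarrow> real" where
  "CC c s K y = (\<Sum>q<K. (1 - c * s q) * cl (s q) (s (Suc q)) y)"

lemma CA:
  fixes s :: "nat \<Rightarrow> real"
  assumes mono: "\<And>i j. i \<le> j \<Longrightarrow> j \<le> K \<Longrightarrow> s i \<le> s j" and c: "c \<ge> 0"
    and p: "p \<le> K" and tu: "s p \<le> t" "t \<le> s K"
  shows "CC c s K t - CC c s K (s p) \<le> (1 - c * s p) * (t - s p)"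
proof -
  have "CC c s K t - CC c s K (s p) = (\<Sum>q<K. (1 - c * s q) * (cl (s q) (s (Suc q)) t - cl (s q) (s (Suc q)) (s p)))"
    unfolding CC_def by (simp add: sum_subtractf[symmetric] algebra_simps)
  also have "\<dots> \<le> (\<Sum>q<K. (1 - c * s p) * (cl (s q) (s (Suc q)) t - cl (s q) (s (Suc q)) (s p)))"
  proof (rule sum_mono)
    fix q assume q: "q \<in> {..<K}"
    show "(1 - c * s q) * (cl (s q) (s (Suc q)) t - cl (s q) (s (Suc q)) (s p))
        \<le> (1 - c * s p) * (cl (s q) (s (Suc q)) t - cl (s q) (s (Suc q)) (s p))"
    proof (cases "q < p")
      case True
      then have "s (Suc q) \<le> s p" using mono p by auto
      then have "cl (s q) (s (Suc q)) t = cl (s q) (s (Suc q)) (s p)" using tu by (auto simp: cl_def)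
      then show ?thesis by simp
    next
      case False
      then have "s p \<le> s q" using mono q by auto
      moreover have "cl (s q) (s (Suc q)) t \<ge> cl (s q) (s (Suc q)) (s p)" using tu by (auto simp: cl_def)
      ultimately show ?thesis using c by (intro mult_right_mono) (auto intro: mult_left_mono)
    qed
  qed
  also have "\<dots> = (1 - c * s p) * (t - s p)"
  proof -
    have s0: "s 0 \<le> s p" using mono p by auto
    have "(\<Sum>q<K. (1 - c * s p) * (cl (s q) (s (Suc q)) t - cl (s q) (s (Suc q)) (s p)))
      = (1 - c * s p) * ((\<Sum>q<K. cl (s q) (s (Suc q)) t) - (\<Sum>q<K. cl (s q) (s (Suc q)) (s p)))"
      by (simp only: sum_subtractf[symmetric] sum_distrib_left)
    also have "\<dots> = (1 - c * s p) * (t - s p)"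
      using sumcl[where s=s and K=K and y=t, OF mono] sumcl[where s=s and K=K and y="s p", OF mono] s0 tu mono p by auto
    finally show ?thesis .
  qed
  finally show ?thesis .
qed

lemma CB:
  fixes s :: "nat \<Rightarrow> real"
  assumes mono: "\<And>i j. i \<le> j \<Longrightarrow> j \<le> K \<Longrightarrow> s i \<le> s j" and c: "c \<ge> 0"
    and tu: "s 0 \<le> t" "t \<le> u" "u \<le> s K"
  shows "CC c s K u - CC c s K t \<ge> (1 - c * u) * (u - t)"
proof -
  have "CC c s K u - CC c s K t = (\<Sum>q<K. (1 - c * s q) * (cl (s q) (s (Suc q)) u - cl (s q) (s (Suc q)) t))"
    unfolding CC_def by (simp add: sum_subtractf[symmetric] algebra_simps)
  also have "\<dots> \<ge> (\<Sum>q<K. (1 - c * u) * (cl (s q) (s (Suc q)) u - cl (s q) (s (Suc q)) t))"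
  proof (rule sum_mono)
    fix q assume q: "q \<in> {..<K}"
    show "(1 - c * u) * (cl (s q) (s (Suc q)) u - cl (s q) (s (Suc q)) t)
        \<le> (1 - c * s q) * (cl (s q) (s (Suc q)) u - cl (s q) (s (Suc q)) t)"
    proof (cases "u \<le> s q")
      case True
      then have "cl (s q) (s (Suc q)) u = cl (s q) (s (Suc q)) t" using tu by (auto simp: cl_def)
      then show ?thesis by simp
    next
      case False
      moreover have "cl (s q) (s (Suc q)) u \<ge> cl (s q) (s (Suc q)) t" using tu by (auto simp: cl_def)
      ultimately show ?thesis using c by (intro mult_right_mono) (auto intro: mult_left_mono)
    qed
  qed
  also have "(\<Sum>q<K. (1 - c * u) * (cl (s q) (s (Suc q)) u - cl (s q) (s (Suc q)) t)) = (1 - c * u) * (u - t)"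
  proof -
    have "(\<Sum>q<K. (1 - c * u) * (cl (s q) (s (Suc q)) u - cl (s q) (s (Suc q)) t))
      = (1 - c * u) * ((\<Sum>q<K. cl (s q) (s (Suc q)) u) - (\<Sum>q<K. cl (s q) (s (Suc q)) t))"
      by (simp only: sum_subtractf[symmetric] sum_distrib_left)
    also have "\<dots> = (1 - c * u) * (u - t)"
      using sumcl[where s=s and K=K and y=t, OF mono] sumcl[where s=s and K=K and y=u, OF mono] tu by auto
    finally show ?thesis .
  qed
  finally show ?thesis .
qed

lemma C0:
  fixes s :: "nat \<Rightarrow> real"
  assumes mono: "\<And>i j. i \<le> j \<Longrightarrow> j \<le> K \<Longrightarrow> s i \<le> s j"
  shows "CC c s K (s 0) = 0"
  unfolding CC_def
proof (rule sum.neutral, intro ballI)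
  fix q assume "q \<in> {..<K}"
  then have "s 0 \<le> s q" using mono by auto
  then show "(1 - c * s q) * cl (s q) (s (Suc q)) (s 0) = 0" by (auto simp: cl_def)
qed

lemma CK:
  fixes s :: "nat \<Rightarrow> real"
  assumes mono: "\<And>i j. i \<le> j \<Longrightarrow> j \<le> K \<Longrightarrow> s i \<le> s j"
  shows "CC c s K (s K) = (\<Sum>q<K. (s (Suc q) - s q) * (1 - c * s q))"
  unfolding CC_def
proof (rule sum.cong[OF refl])
  fix q assume "q \<in> {..<K}"
  then have "s (Suc q) \<le> s K" "s q \<le> s (Suc q)" using mono by auto
  then show "(1 - c * s q) * cl (s q) (s (Suc q)) (s K) = (s (Suc q) - s q) * (1 - c * s q)"
    by (auto simp: cl_def)
qed

definition GG :: "real \<Rightarrow> real \<Rightarrow> real" where "GG c y = y - c * y^2 / 2"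

lemma GGle: "c \<ge> 0 \<Longrightarrow> GG c t - GG c u \<le> (t - u) * (1 - c * u)"
proof -
  assume c: "c \<ge> 0"
  have "(t - u) * (1 - c * u) - (GG c t - GG c u) = c * (t - u)^2 / 2"
    unfolding GG_def by (simp add: algebra_simps power2_eq_square)
  moreover have "c * (t - u)^2 / 2 \<ge> 0" using c by simp
  ultimately show ?thesis by linarith
qed

definition FF :: "real \<Rightarrow> (nat \<Rightarrow> real) \<Rightarrow> nat \<Rightarrow> real \<Rightarrow> real" where
  "FF c s K y = (if y < s 0 then GG c y - GG c (s 0) else CC c s K y)"

lemma FFstep:
  fixes s :: "nat \<Rightarrow> real"
  assumes mono: "\<And>i j. i \<le> j \<Longrightarrow> j \<le> K \<Longrightarrow> s i \<le> s j" and c: "c \<ge> 0"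
    and u: "u < s 0 \<or> (\<exists>p\<le>K. u = s p)" and uK: "u \<le> s K" and tK: "t \<le> s K"
  shows "FF c s K t - FF c s K u \<le> (t - u) * (1 - c * u)"
proof (cases "u < s 0")
  case True
  note u0 = True
  show ?thesis
  proof (cases "t < s 0")
    case True
    then show ?thesis using u0 GGle[OF c, of t u] by (simp add: FF_def)
  next
    case False
    have A: "CC c s K t - CC c s K (s 0) \<le> (1 - c * s 0) * (t - s 0)"
      using CA[where s=s and K=K and p=0 and t=t, OF mono c] False tK by auto
    have G: "GG c (s 0) - GG c u \<le> (s 0 - u) * (1 - c * u)" using GGle[OF c] by blast
    have "(1 - c * s 0) * (t - s 0) \<le> (1 - c * u) * (t - s 0)"
      using False u0 c by (intro mult_right_mono) (auto intro: mult_left_mono)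
    then show ?thesis using A G u0 False C0[where s=s and K=K and c=c, OF mono] by (simp add: FF_def algebra_simps)
  qed
next
  case False
  note u0 = False
  then obtain p where p: "p \<le> K" "u = s p" using u by auto
  show ?thesis
  proof (cases "t < s 0")
    case True
    have B: "CC c s K u - CC c s K (s 0) \<ge> (1 - c * u) * (u - s 0)"
      using CB[where s=s and K=K and t="s 0" and u=u, OF mono c] u0 uK by auto
    have G: "GG c t - GG c (s 0) \<le> (t - s 0) * (1 - c * s 0)" using GGle[OF c] by blast
    have "(t - s 0) * (1 - c * s 0) \<le> (t - s 0) * (1 - c * u)"
      using True u0 c by (intro mult_left_mono_neg) (auto intro: mult_left_mono)
    then show ?thesis using B G u0 True C0[where s=s and K=K and c=c, OF mono] by (simp add: FF_def algebra_simps)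
  next
    case False
    show ?thesis
    proof (cases "u \<le> t")
      case True
      then show ?thesis using CA[where s=s and K=K and t=t, OF mono c p(1)] p tK False u0 by (simp add: FF_def algebra_simps)
    next
      case f2: False
      then show ?thesis using CB[where s=s and K=K and t=t and u=u, OF mono c] uK False u0 by (simp add: FF_def algebra_simps)
    qed
  qed
qed

lemma key:
  fixes s D :: "nat \<Rightarrow> real"
  assumes mono: "\<And>i j. i \<le> j \<Longrightarrow> j \<le> K \<Longrightarrow> s i \<le> s j" and c: "c \<ge> 0"
    and s0: "s 0 = D 0" and sK: "s K = D m" and Dm: "\<And>n. n \<le> m \<Longrightarrow> D n \<le> D m"
    and lev: "\<And>n. n \<le> m \<Longrightarrow> D n \<ge> D 0 \<Longrightarrow> \<exists>q\<le>K. s q = D n"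
  shows "(\<Sum>q<K. (s (Suc q) - s q) * (1 - c * s q)) \<le> (\<Sum>n<m. (D (Suc n) - D n) * (1 - c * D n))"
proof -
  have "(\<Sum>q<K. (s (Suc q) - s q) * (1 - c * s q)) = FF c s K (D m) - FF c s K (D 0)"
    using CK[where s=s and K=K and c=c, OF mono] C0[where s=s and K=K and c=c, OF mono] s0 sK Dm[of 0] by (simp add: FF_def)
  also have "\<dots> = (\<Sum>n<m. FF c s K (D (Suc n)) - FF c s K (D n))"
    by (rule sum_lessThan_telescope[symmetric])
  also have "\<dots> \<le> (\<Sum>n<m. (D (Suc n) - D n) * (1 - c * D n))"
  proof (rule sum_mono)
    fix n assume n: "n \<in> {..<m}"
    have "D n < s 0 \<or> (\<exists>p\<le>K. D n = s p)" using lev[of n] n s0 by force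
    then show "FF c s K (D (Suc n)) - FF c s K (D n) \<le> (D (Suc n) - D n) * (1 - c * D n)"
      using FFstep[where s=s and K=K and u="D n" and t="D (Suc n)", OF mono c] Dm[of n] Dm[of "Suc n"] n sK by auto
  qed
  finally show ?thesis .
qed


theorem lemmaA1:
  fixes N :: nat and \<kappa> h c1 c2 La :: real and a :: "real \<Rightarrow> real"
    and x v :: "nat \<Rightarrow> nat \<Rightarrow> real ^ 'd"
    and ninf K :: nat and s :: "nat \<Rightarrow> real"
  assumes N: "N \<ge> 1" and kappa: "\<kappa> > 0"
    and h: "0 < h" "h < min 1 (1 / \<kappa>)"
    and c: "0 < c1" "c1 \<le> c2"
    and a_bounds: "\<And>r. r \<ge> 0 \<Longrightarrow> c1 \<le> a r \<and> a r \<le> c2"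
    and La: "La > 0"
    and a_lip: "\<And>r1 r2. r1 \<ge> 0 \<Longrightarrow> r2 \<ge> 0 \<Longrightarrow> \<bar>a r1 - a r2\<bar> \<le> La * \<bar>r1 - r2\<bar>"
    and sol: "MT_solution N \<kappa> h a x v"
    and ninf_pos: "ninf > 0"
    and below: "\<And>n. n < ninf \<Longrightarrow> DeltaF N x n \<le> M_const N c1 c2 La"
    and above: "DeltaF N x ninf > M_const N c1 c2 La"
    and s_mono: "strict_mono_on {..K} s"
    and s_range: "s ` {..K} = {DeltaF N x n | n. n \<le> ninf \<and> DeltaF N x n \<ge> DeltaF N x 0}"
  shows "s 0 = DeltaF N x 0 \<and> s K = DeltaF N x ninf \<and>
    (\<Sum>q<K. (s (Suc q) - s q) * psi N c1 c2 La (s q))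
      \<le> (\<Sum>n<ninf. (DeltaF N x (Suc n) - DeltaF N x n) * psi N c1 c2 La (DeltaF N x n))"
  proof -
  define D where "D = DeltaF N x"
  define S where "S = {DeltaF N x n | n. n \<le> ninf \<and> DeltaF N x n \<ge> DeltaF N x 0}"
  define c where "c = phi_Lip N c1 c2 La * real N"
  have mono: "\<And>i j. i \<le> j \<Longrightarrow> j \<le> K \<Longrightarrow> s i \<le> s j"
    using strict_mono_on_leD[OF s_mono] by auto
  have c0: "c \<ge> 0" unfolding c_def phi_Lip_def using c La N by simp
  have psi: "\<And>y. psi N c1 c2 La y = 1 - c * y" unfolding psi_def c_def by simp
  have Dm: "\<And>n. n \<le> ninf \<Longrightarrow> D n \<le> D ninf"
  proof -
    fix n assume "n \<le> ninf"
    then show "D n \<le> D ninf"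
      using below[of n] above unfolding D_def by (cases "n = ninf") auto
  qed
  have inS: "\<And>n. n \<le> ninf \<Longrightarrow> D n \<ge> D 0 \<Longrightarrow> \<exists>q\<le>K. s q = D n"
  proof -
    fix n assume "n \<le> ninf" "D n \<ge> D 0"
    then have "D n \<in> s ` {..K}" using s_range unfolding D_def by auto
    then show "\<exists>q\<le>K. s q = D n" by auto
  qed
  have Sge: "\<And>q. q \<le> K \<Longrightarrow> D 0 \<le> s q \<and> (\<exists>n\<le>ninf. s q = D n)"
  proof -
    fix q assume "q \<le> K"
    then have "s q \<in> s ` {..K}" by auto
    then show "D 0 \<le> s q \<and> (\<exists>n\<le>ninf. s q = D n)" using s_range unfolding D_def by auto
  qed
  have s0: "s 0 = D 0"
  proof -
    obtain p where "p \<le> K" "s p = D 0" using inS[of 0] by auto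
    then show ?thesis using mono[of 0 p] Sge[of 0] by auto
  qed
  have sK: "s K = D ninf"
  proof -
    have "D 0 \<le> D ninf" using Dm[of 0] by simp
    then obtain p where "p \<le> K" "s p = D ninf" using inS[of ninf] by auto
    moreover obtain n where "n \<le> ninf" "s K = D n" using Sge[of K] by auto
    ultimately show ?thesis using mono[of p K] Dm[of n] by auto
  qed
  have "(\<Sum>q<K. (s (Suc q) - s q) * (1 - c * s q)) \<le> (\<Sum>n<ninf. (D (Suc n) - D n) * (1 - c * D n))"
    by (rule key[OF mono c0 s0 sK Dm inS])
  then show ?thesis using s0 sK unfolding psi D_def by simp
qed

end
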